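(* Let $h:[-1,1]\to(-\infty,+\infty]$ be a potential, $\tau$ a positive integer, $C\subset\mathbb{S}^{n-1}$ a spherical $\tau$-design of cardinality $N$, and $s=s_C$ (so $s\le s_{\tau,N}$). Let $f\in\mathcal{A}(n,s,\tau,h)$. Then $U_h(x,C)\le U_f(x,C)=f_0|C|$ for every $x\in\mathbb{S}^{n-1}$ such that $x\cdot y\in[-1,s]$ for all $y\in C$. Consequently, $\mathcal{Q}_h(C)\le\min_{f\in\mathcal{A}(n,s,\tau,h)}\{f_0|C|\}$.
   Context: $\mathbb{S}^{n-1}$ is the unit sphere in $\mathbb{R}^n$. $U_g(x,C):=\sum_{y\in C}g(x\cdot y)$, $\mathcal{Q}_h(C):=\inf_{x\in\mathbb{S}^{n-1}}U_h(x,C)$. A spherical $\tau$-design is a finite $C\subset\mathbb{S}^{n-1}$ on which the average of every polynomial of degree $\le\tau$ equals its average over the sphere. $s_C:=\min_{x\in\mathbb{S}^{n-1}}\max_{y\in C}x\cdot y$; $s_{\tau,N}:=\max\{s_C: C\text{ a }\tau\text{-design}, |C|=N\}$. $f_0:=\gamma_n\int_{-1}^1f(t)(1-t^2)^{(n-3)/2}dt$ with $\gamma_n\int_{-1}^1(1-t^2)^{(n-3)/2}dt=1$. For $s\in(-1,1]$, $\mathcal{A}(n,s,\tau,h)$ is the set of real polynomials $f$ with $\deg f\le\tau$ and $f(t)\ge h(t)$ for all $t\in[-1,s]$. *)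

theory Defs
  imports "HOL-Analysis.Analysis" "HOL-Computational_Algebra.Polynomial"
begin

text \<open>Unit sphere S^{n-1} in R^n, with n = CARD('n).\<close>
abbreviation usphere :: "(real ^ 'n) set" where
  "usphere \<equiv> sphere 0 1"

definition monomial_fun :: "('n::finite \<Rightarrow> nat) \<Rightarrow> real ^ 'n \<Rightarrow> real" where
  "monomial_fun \<alpha> x = (\<Prod>i\<in>UNIV. (x $ i) ^ (\<alpha> i))"

definition poly_fun_deg :: "nat \<Rightarrow> (real ^ 'n::finite \<Rightarrow> real) \<Rightarrow> bool" where
  "poly_fun_deg \<tau> p \<longleftrightarrow> (\<exists>S c. finite S \<and> (\<forall>\<alpha>\<in>S. (\<Sum>i\<in>UNIV. \<alpha> i) \<le> \<tau>) \<and>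
       p = (\<lambda>x. \<Sum>\<alpha>\<in>S. c \<alpha> * monomial_fun \<alpha> x))"

text \<open>Average over the sphere w.r.t. normalized surface measure, realised via the
  cone measure: the average of g over S^{n-1} equals the average over the unit ball
  of x \<mapsto> g(x/|x|).\<close>
definition sphere_avg :: "(real ^ 'n::finite \<Rightarrow> real) \<Rightarrow> real" where
  "sphere_avg g = integral (ball 0 1) (\<lambda>x. g (x /\<^sub>R norm x)) / measure lebesgue (ball (0::real^'n) 1)"

definition spherical_design :: "nat \<Rightarrow> (real ^ 'n::finite) set \<Rightarrow> bool" where
  "spherical_design \<tau> C \<longleftrightarrow> finite C \<and> C \<noteq> {} \<and> C \<subseteq> usphere \<and>
     (\<forall>p. poly_fun_deg \<tau> p \<longrightarrow> (\<Sum>y\<in>C. p y) / real (card C) = sphere_avg p)"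

definition U :: "(real \<Rightarrow> real) \<Rightarrow> real ^ 'n::finite \<Rightarrow> (real ^ 'n) set \<Rightarrow> real" where
  "U g x C = (\<Sum>y\<in>C. g (x \<bullet> y))"

definition Ue :: "(real \<Rightarrow> ereal) \<Rightarrow> real ^ 'n::finite \<Rightarrow> (real ^ 'n) set \<Rightarrow> ereal" where
  "Ue h x C = (\<Sum>y\<in>C. h (x \<bullet> y))"

definition Qh :: "(real \<Rightarrow> ereal) \<Rightarrow> (real ^ 'n::finite) set \<Rightarrow> ereal" where
  "Qh h C = (INF x\<in>usphere. Ue h x C)"

definition s_C :: "(real ^ 'n::finite) set \<Rightarrow> real" where
  "s_C C = (INF x\<in>usphere. Max ((\<lambda>y. x \<bullet> y) ` C))"

text \<open>f_0 = gamma_n \<integral>_{-1}^1 f(t)(1-t^2)^((n-3)/2) dt, gamma_n the normalising constant.\<close>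
definition gegen_weight :: "nat \<Rightarrow> real \<Rightarrow> real" where
  "gegen_weight n t = (1 - t\<^sup>2) powr ((real n - 3) / 2)"

definition f0 :: "nat \<Rightarrow> real poly \<Rightarrow> real" where
  "f0 n f = integral {-1..1} (\<lambda>t. poly f t * gegen_weight n t) / integral {-1..1} (gegen_weight n)"

definition adm :: "nat \<Rightarrow> real \<Rightarrow> nat \<Rightarrow> (real \<Rightarrow> ereal) \<Rightarrow> real poly set" where
  "adm n s \<tau> h = {f. degree f \<le> \<tau> \<and> (\<forall>t\<in>{-1..s}. ereal (poly f t) \<ge> h t)}"

end

theory Submission
  imports Defs
begin


definition Qm :: "nat \<Rightarrow> nat \<Rightarrow> real" where
  "Qm n k = integral {-1..1} (\<lambda>t. t^k * gegen_weight n t)"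

lemma aux0: "(x - 1)/2 = 1 + (x - 3)/(2::real)" by (simp add: field_simps)
lemma aux3: "(x-1)/2 - 1 = (x - 3)/(2::real)" by (simp add: field_simps)
lemma E1g: fixes t x P Q :: real shows
 "c * t^k * Q + t^(Suc k) * ((x - 1)/2 * P * (0 - 2 * t))
  = c * (t^k * Q) - (x - 1) * (t^(k+2) * P)"
  by (simp add: field_simps power2_eq_square)
lemma E2g: fixes t x P :: real shows
 "(x - 1)/2 * P * (-2 * t) = - (x - 1) * (t * P)"
  by (simp add: field_simps)
lemma aux1: "1 + (x*2-2)/2 = (x::real)" by (simp add: field_simps)
lemma aux2: "3 + (x*2-6)/2 = (x::real)" by (simp add: field_simps)

lemma one_minus_sq_pos: "t \<in> {-1<..<1} \<Longrightarrow> 1 - (t::real)\<^sup>2 > 0"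
proof -
  assume "t \<in> {-1<..<1}"
  then have "\<bar>t\<bar> < 1" by auto
  then have "t\<^sup>2 < 1" by (simp add: abs_square_less_1)
  then show ?thesis by linarith
qed

lemma gw_interior:
  assumes "t \<in> {-1<..<1}"
  shows "(1 - t\<^sup>2) powr ((real n - 1)/2) = (1 - t\<^sup>2) * gegen_weight n t"
proof -
  have p: "1 - t\<^sup>2 > 0" using one_minus_sq_pos[OF assms] .
  have "(real n - 1)/2 = 1 + (real n - 3)/2" by (rule aux0)
  then have "(1 - t\<^sup>2) powr ((real n - 1)/2) = (1 - t\<^sup>2) powr 1 * (1 - t\<^sup>2) powr ((real n - 3)/2)"
    by (metis p powr_add)
  then show ?thesis using p by (simp add: gegen_weight_def aux2)
qed

lemma H_cont:
  assumes "n \<ge> 2"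
  shows "continuous_on {-1..1} (\<lambda>t::real. t^k * (1 - t\<^sup>2) powr ((real n - 1)/2))"
proof -
  have "continuous_on {-1..1} (\<lambda>t::real. (1 - t\<^sup>2) powr ((real n - 1)/2))"
  proof (rule continuous_on_powr')
    show "\<forall>x\<in>{-1..1::real}. 0 \<le> 1 - x\<^sup>2 \<and> (1 - x\<^sup>2 = 0 \<longrightarrow> 0 < (real n - 1) / 2)"
      using assms by (auto simp: abs_square_le_1)
  qed (auto intro!: continuous_intros)
  then show ?thesis by (auto intro!: continuous_intros)
qed

lemma ftc_step:
  assumes "n \<ge> 2"
  shows "((\<lambda>t. real (Suc k) * (t^k * (1 - t\<^sup>2) powr ((real n - 1)/2)) - (real n - 1) * (t^(k+2) * gegen_weight n t))
          has_integral 0) {-1..1}"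
proof -
  let ?a = "(real n - 1)/2"
  let ?F = "\<lambda>t::real. t^(Suc k) * (1 - t\<^sup>2) powr ?a"
  have c: "continuous_on {-1..1} ?F" using H_cont[OF assms, of "Suc k"] by simp
  have d: "(?F has_vector_derivative (real (Suc k) * (t^k * (1 - t\<^sup>2) powr ?a) - (real n - 1) * (t^(k+2) * gegen_weight n t))) (at t)"
    if t: "t \<in> {-1<..<1}" for t
  proof -
    have p: "1 - t\<^sup>2 > 0" using one_minus_sq_pos[OF t] .
    have D0: "((\<lambda>t::real. 1 - t\<^sup>2) has_real_derivative (-2*t)) (at t)"
      by (auto intro!: derivative_eq_intros)
    have D1: "((\<lambda>t::real. (1 - t\<^sup>2) powr ?a) has_real_derivative ?a * (1 - t\<^sup>2) powr (?a - 1) * (-2*t)) (at t)"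
      using DERIV_fun_powr[OF D0 p, of ?a] unfolding of_nat_1 .
    have D2: "((\<lambda>t::real. t^Suc k) has_real_derivative real (Suc k) * t^k) (at t)"
      using DERIV_pow[of "Suc k" t] by simp
    have "(?F has_real_derivative (real (Suc k) * t^k * (1 - t\<^sup>2) powr ?a + t^(Suc k) * (?a * (1 - t\<^sup>2) powr (?a - 1) * (0 - 2 * t)))) (at t)"
      using DERIV_mult[OF D2 D1] by (simp add: algebra_simps)
    then have "(?F has_real_derivative (real (Suc k) * (t^k * (1 - t\<^sup>2) powr ?a) - (real n - 1) * (t^(k+2) * gegen_weight n t))) (at t)"
      unfolding E1g aux3 gegen_weight_def .
    then show ?thesis unfolding has_real_derivative_iff_has_vector_derivative .
  qed
  have "((\<lambda>t. real (Suc k) * (t^k * (1 - t\<^sup>2) powr ?a) - (real n - 1) * (t^(k+2) * gegen_weight n t)) has_integral (?F 1 - ?F (-1))) {-1..1}"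
    by (rule fundamental_theorem_of_calculus_interior) (use c d in auto)
  then show ?thesis by simp
qed

lemma int_cmul: "f integrable_on S \<Longrightarrow> (\<lambda>x. (c::real) * f x) integrable_on S"
  using integrable_cmul[of f S c] by simp

definition Hm :: "nat \<Rightarrow> nat \<Rightarrow> real \<Rightarrow> real" where
  "Hm n k t = t^k * (1 - t\<^sup>2) powr ((real n - 1)/2)"

lemma H_int: "n \<ge> 2 \<Longrightarrow> Hm n k integrable_on {-1..1}"
  unfolding Hm_def by (rule integrable_continuous_interval) (rule H_cont)

lemma H_eq: "t \<in> {-1<..<1} \<Longrightarrow> Hm n k t = t^k * gegen_weight n t - t^(k+2) * gegen_weight n t"
  unfolding Hm_def by (subst gw_interior) (auto simp: algebra_simps power2_eq_square)

lemma Q_int2: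
  assumes "n \<ge> 2"
  shows "(\<lambda>t. t^(k+2) * gegen_weight n t) integrable_on {-1..1}"
proof -
  have G: "(\<lambda>t. real (Suc k) * Hm n k t - (real n - 1) * (t^(k+2) * gegen_weight n t)) integrable_on {-1..1}"
    using ftc_step[OF assms, of k] unfolding Hm_def by blast
  have "(\<lambda>t. (1 / (real n - 1)) * (real (Suc k) * Hm n k t - (real (Suc k) * Hm n k t - (real n - 1) * (t^(k+2) * gegen_weight n t)))) integrable_on {-1..1}"
    by (intro int_cmul integrable_diff H_int assms G)
  moreover have "(1 / (real n - 1)) * (real (Suc k) * Hm n k t - (real (Suc k) * Hm n k t - (real n - 1) * (t^(k+2) * gegen_weight n t)))
     = t^(k+2) * gegen_weight n t" for t
    using assms by (simp add: field_simps)
  ultimately show ?thesis by simp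
qed

lemma Q_int:
  assumes "n \<ge> 2"
  shows "(\<lambda>t. t^k * gegen_weight n t) integrable_on {-1..1}"
proof -
  have I: "(\<lambda>t. t^(k+2) * gegen_weight n t + Hm n k t) integrable_on {-1..1}"
    by (intro integrable_add Q_int2 H_int assms)
  show ?thesis
    by (rule integrable_spike_finite[of "{-1,1}", OF _ _ I]) (auto simp: H_eq)
qed

lemma H_integral: "n \<ge> 2 \<Longrightarrow> integral {-1..1} (Hm n k) = Qm n k - Qm n (k+2)"
proof -
  assume n: "n \<ge> 2"
  have "integral {-1..1} (Hm n k) = integral {-1..1} (\<lambda>t. t^k * gegen_weight n t - t^(k+2) * gegen_weight n t)"
    by (rule integral_spike[of "{-1,1}"]) (auto simp: H_eq)
  also have "\<dots> = Qm n k - Qm n (k+2)"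
    unfolding Qm_def by (rule integral_diff[OF Q_int[OF n] Q_int[OF n]])
  finally show ?thesis .
qed

lemma Q_rec:
  assumes "n \<ge> 2"
  shows "(real n + real k) * Qm n (k+2) = (real k + 1) * Qm n k"
proof -
  have "integral {-1..1} (\<lambda>t. real (Suc k) * Hm n k t - (real n - 1) * (t^(k+2) * gegen_weight n t)) = 0"
    using ftc_step[OF assms, of k] unfolding Hm_def by (simp add: integral_unique)
  moreover have "integral {-1..1} (\<lambda>t. real (Suc k) * Hm n k t - (real n - 1) * (t^(k+2) * gegen_weight n t))
     = real (Suc k) * integral {-1..1} (Hm n k) - (real n - 1) * Qm n (k+2)"
    unfolding Qm_def
    by (subst integral_diff[OF int_cmul[OF H_int[OF assms]] int_cmul[OF Q_int2[OF assms]]]) simp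
  ultimately show ?thesis using H_integral[OF assms, of k] by (simp add: algebra_simps)
qed

lemma Q1:
  assumes "n \<ge> 2"
  shows "Qm n 1 = 0"
proof -
  let ?a = "(real n - 1)/2"
  let ?F = "\<lambda>t::real. (1 - t\<^sup>2) powr ?a"
  have c: "continuous_on {-1..1} ?F" using H_cont[OF assms, of 0] by simp
  have d: "(?F has_vector_derivative (- (real n - 1) * (t * gegen_weight n t))) (at t)"
    if t: "t \<in> {-1<..<1}" for t
  proof -
    have p: "1 - t\<^sup>2 > 0" using one_minus_sq_pos[OF t] .
    have D0: "((\<lambda>t::real. 1 - t\<^sup>2) has_real_derivative (-2*t)) (at t)"
      by (auto intro!: derivative_eq_intros)
    have D1: "(?F has_real_derivative ?a * (1 - t\<^sup>2) powr (?a - 1) * (-2*t)) (at t)"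
      using DERIV_fun_powr[OF D0 p, of ?a] unfolding of_nat_1 .
    then have "(?F has_real_derivative (- (real n - 1) * (t * gegen_weight n t))) (at t)"
      unfolding E2g aux3 gegen_weight_def .
    then show ?thesis unfolding has_real_derivative_iff_has_vector_derivative .
  qed
  have "((\<lambda>t. - (real n - 1) * (t * gegen_weight n t)) has_integral (?F 1 - ?F (-1))) {-1..1}"
    by (rule fundamental_theorem_of_calculus_interior) (use c d in auto)
  then have "((\<lambda>t. - (real n - 1) * (t * gegen_weight n t)) has_integral 0) {-1..1}" by simp
  then have "integral {-1..1} (\<lambda>t. - (real n - 1) * (t * gegen_weight n t)) = 0" by (rule integral_unique)
  then have "(real n - 1) * Qm n 1 = 0" unfolding Qm_def by simp
  then show ?thesis using assms by simp
qed

lemma H0_pos: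
  assumes "n \<ge> 2"
  shows "integral {-1..1} (Hm n 0) > 0"
proof -
  let ?a = "(real n - 1)/2"
  have "integral {-1/2..1/2} (\<lambda>t::real. (3/4) powr ?a) \<le> integral {-1/2..1/2} (Hm n 0)"
  proof (rule integral_le)
    show "(Hm n 0) integrable_on {-1/2..1/2}"
      by (rule integrable_on_subinterval[OF H_int[OF assms]]) auto
    fix t :: real assume t: "t \<in> {-1/2..1/2}"
    have "\<bar>t\<bar> \<le> 1/2" using t by auto
    then have "\<bar>t\<bar>\<^sup>2 \<le> (1/2)\<^sup>2" by (rule power_mono) simp
    then have "t\<^sup>2 \<le> 1/4" by (simp add: power2_eq_square)
    then show "(3/4) powr ?a \<le> Hm n 0 t"
      unfolding Hm_def using assms by (auto intro!: powr_mono2)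
  qed auto
  also have "\<dots> \<le> integral {-1..1} (Hm n 0)"
    by (rule integral_subset_le) (auto intro!: integrable_on_subinterval[OF H_int[OF assms]] H_int[OF assms] simp: Hm_def)
  finally have "(3/4) powr ?a \<le> integral {-1..1} (Hm n 0)" by simp
  moreover have "(3/4::real) powr ?a > 0" by simp
  ultimately show ?thesis by linarith
qed

lemma Q0_pos:
  assumes "n \<ge> 2"
  shows "Qm n 0 > 0"
proof -
  have h1: "real n * Qm n 2 = Qm n 0" using Q_rec[OF assms, of 0] by (simp add: eval_nat_numeral)
  have h2: "integral {-1..1} (Hm n 0) = Qm n 0 - Qm n 2" using H_integral[OF assms, of 0] by (simp add: eval_nat_numeral)
  have e1: "Qm n 0 * (real n - 1) = Qm n 0 * real n - Qm n 0" by (simp add: right_diff_distrib)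
  have e2: "Qm n 2 * real n = Qm n 0" using h1 by (simp add: mult.commute)
  have e3: "integral {-1..1} (Hm n 0) * real n = Qm n 0 * real n - Qm n 2 * real n"
    by (simp add: h2 left_diff_distrib)
  have e4: "integral {-1..1} (Hm n 0) * real n = Qm n 0 * (real n - 1)"
    using e1 e2 e3 by linarith
  have "real n > 0" "real n - 1 > 0" using assms by auto
  then have "Qm n 0 * (real n - 1) > 0" using H0_pos[OF assms] e4 by (metis mult_pos_pos)
  then show ?thesis using \<open>real n - 1 > 0\<close> by (simp add: zero_less_mult_iff)
qed


lemma pf_mono:
  assumes "poly_fun_deg d p" "d \<le> e"
  shows "poly_fun_deg e p"
proof -
  obtain S c where S: "finite S" "\<forall>\<alpha>\<in>S. (\<Sum>i\<in>UNIV. \<alpha> i) \<le> d"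
    "p = (\<lambda>x. \<Sum>\<alpha>\<in>S. c \<alpha> * monomial_fun \<alpha> x)"
    using assms(1) unfolding poly_fun_deg_def by blast
  have deg: "\<forall>\<alpha>\<in>S. (\<Sum>i\<in>UNIV. \<alpha> i) \<le> e" using S(2) assms(2) order_trans by blast
  show ?thesis unfolding poly_fun_deg_def
    by (rule exI[of _ S], rule exI[of _ c]) (intro conjI S(1) deg S(3))
qed

lemma monomial_fun_zero: "monomial_fun (\<lambda>_. 0) x = 1"
  by (simp add: monomial_fun_def)

lemma pf_const: "poly_fun_deg d (\<lambda>_. c)"
  unfolding poly_fun_deg_def
  by (rule exI[of _ "{\<lambda>_. 0}"], rule exI[of _ "\<lambda>_. c"]) (simp add: monomial_fun_zero)

lemma pf_add:
  assumes "poly_fun_deg d p" "poly_fun_deg d q"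
  shows "poly_fun_deg d (\<lambda>x. p x + q x)"
proof -
  obtain S1 c1 where S1: "finite S1" "\<forall>\<alpha>\<in>S1. (\<Sum>i\<in>UNIV. \<alpha> i) \<le> d"
    "p = (\<lambda>x. \<Sum>\<alpha>\<in>S1. c1 \<alpha> * monomial_fun \<alpha> x)"
    using assms(1) unfolding poly_fun_deg_def by blast
  obtain S2 c2 where S2: "finite S2" "\<forall>\<alpha>\<in>S2. (\<Sum>i\<in>UNIV. \<alpha> i) \<le> d"
    "q = (\<lambda>x. \<Sum>\<alpha>\<in>S2. c2 \<alpha> * monomial_fun \<alpha> x)"
    using assms(2) unfolding poly_fun_deg_def by blast
  let ?c = "\<lambda>\<alpha>. (if \<alpha> \<in> S1 then c1 \<alpha> else 0) + (if \<alpha> \<in> S2 then c2 \<alpha> else 0)"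
  have e1: "(\<Sum>\<alpha>\<in>S1 \<union> S2. (if \<alpha> \<in> S1 then c1 \<alpha> else 0) * monomial_fun \<alpha> x) = (\<Sum>\<alpha>\<in>S1. c1 \<alpha> * monomial_fun \<alpha> x)" for x
    by (rule sum.mono_neutral_cong_right) (use S1 S2 in auto)
  have e2: "(\<Sum>\<alpha>\<in>S1 \<union> S2. (if \<alpha> \<in> S2 then c2 \<alpha> else 0) * monomial_fun \<alpha> x) = (\<Sum>\<alpha>\<in>S2. c2 \<alpha> * monomial_fun \<alpha> x)" for x
    by (rule sum.mono_neutral_cong_right) (use S1 S2 in auto)
  have pq: "p x + q x = (\<Sum>\<alpha>\<in>S1 \<union> S2. ?c \<alpha> * monomial_fun \<alpha> x)" for x
  proof -
    have "(\<Sum>\<alpha>\<in>S1 \<union> S2. ?c \<alpha> * monomial_fun \<alpha> x) = (\<Sum>\<alpha>\<in>S1 \<union> S2. (if \<alpha> \<in> S1 then c1 \<alpha> else 0) * monomial_fun \<alpha> x)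
       + (\<Sum>\<alpha>\<in>S1 \<union> S2. (if \<alpha> \<in> S2 then c2 \<alpha> else 0) * monomial_fun \<alpha> x)"
      by (simp only: distrib_right sum.distrib)
    then show ?thesis unfolding e1 e2 S1(3) S2(3) by simp
  qed
  have feq: "(\<lambda>x. p x + q x) = (\<lambda>x. \<Sum>\<alpha>\<in>S1 \<union> S2. ?c \<alpha> * monomial_fun \<alpha> x)"
    by (rule ext) (rule pq)
  have deg: "\<forall>\<alpha>\<in>S1 \<union> S2. (\<Sum>i\<in>UNIV. \<alpha> i) \<le> d" using S1(2) S2(2) by blast
  have fin: "finite (S1 \<union> S2)" using S1(1) S2(1) by simp
  show ?thesis unfolding poly_fun_deg_def
    by (rule exI[of _ "S1 \<union> S2"], rule exI[of _ ?c]) (intro conjI fin deg feq)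
qed

lemma pf_cmult:
  assumes "poly_fun_deg d p"
  shows "poly_fun_deg d (\<lambda>x. c * p x)"
proof -
  obtain S1 c1 where S1: "finite S1" "\<forall>\<alpha>\<in>S1. (\<Sum>i\<in>UNIV. \<alpha> i) \<le> d"
    "p = (\<lambda>x. \<Sum>\<alpha>\<in>S1. c1 \<alpha> * monomial_fun \<alpha> x)"
    using assms(1) unfolding poly_fun_deg_def by blast
  have feq: "(\<lambda>x. c * p x) = (\<lambda>x. \<Sum>\<alpha>\<in>S1. (c * c1 \<alpha>) * monomial_fun \<alpha> x)"
    unfolding S1(3) by (rule ext) (simp add: sum_distrib_left mult.assoc)
  show ?thesis unfolding poly_fun_deg_def
    by (rule exI[of _ S1], rule exI[of _ "\<lambda>\<alpha>. c * c1 \<alpha>"]) (intro conjI S1(1) S1(2) feq)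
qed

lemma pf_sum:
  assumes "finite I" "\<And>i. i \<in> I \<Longrightarrow> poly_fun_deg d (f i)"
  shows "poly_fun_deg d (\<lambda>x. \<Sum>i\<in>I. f i x)"
  using assms
proof (induction I rule: finite_induct)
  case empty
  then show ?case using pf_const[of d 0] by simp
next
  case (insert a I)
  then show ?case by (simp add: pf_add)
qed

lemma monomial_fun_inc:
  "monomial_fun (\<alpha>(j := Suc (\<alpha> j))) x = x $ j * monomial_fun \<alpha> x"
proof -
  have 1: "monomial_fun (\<alpha>(j := Suc (\<alpha> j))) x = (x $ j) ^ Suc (\<alpha> j) * (\<Prod>i\<in>UNIV - {j}. (x $ i) ^ \<alpha> i)"
    unfolding monomial_fun_def by (subst prod.remove[of UNIV j]) (auto intro!: prod.cong)
  have 2: "monomial_fun \<alpha> x = (x $ j) ^ \<alpha> j * (\<Prod>i\<in>UNIV - {j}. (x $ i) ^ \<alpha> i)"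
    unfolding monomial_fun_def by (subst prod.remove[of UNIV j]) auto
  show ?thesis unfolding 1 2 by (simp add: mult.assoc)
qed

lemma sum_inc:
  fixes \<alpha> :: "'n::finite \<Rightarrow> nat"
  shows "sum (\<alpha>(j := Suc (\<alpha> j))) UNIV = Suc (sum \<alpha> UNIV)"
proof -
  have 1: "sum (\<alpha>(j := Suc (\<alpha> j))) UNIV = Suc (\<alpha> j) + (\<Sum>i\<in>UNIV - {j}. \<alpha> i)"
    by (subst sum.remove[of UNIV j]) (auto intro!: sum.cong)
  have 2: "sum \<alpha> UNIV = \<alpha> j + (\<Sum>i\<in>UNIV - {j}. \<alpha> i)"
    by (subst sum.remove[of UNIV j]) auto
  show ?thesis unfolding 1 2 by simp
qed

lemma pf_coord_mult:
  fixes p :: "real^'n::finite \<Rightarrow> real"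
  assumes "poly_fun_deg d p"
  shows "poly_fun_deg (Suc d) (\<lambda>x. x $ j * p x)"
proof -
  obtain S1 c1 where S1: "finite S1" "\<forall>\<alpha>\<in>S1. (\<Sum>i\<in>UNIV. \<alpha> i) \<le> d"
    "p = (\<lambda>x. \<Sum>\<alpha>\<in>S1. c1 \<alpha> * monomial_fun \<alpha> x)"
    using assms(1) unfolding poly_fun_deg_def by blast
  define inc :: "('n \<Rightarrow> nat) \<Rightarrow> ('n \<Rightarrow> nat)" where "inc = (\<lambda>\<alpha>. \<alpha>(j := Suc (\<alpha> j)))"
  have inj: "inj inc"
  proof (rule injI)
    fix a b assume e: "inc a = inc b"
    show "a = b"
    proof
      fix i show "a i = b i" using fun_cong[OF e, of i] unfolding inc_def by (cases "i = j") auto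
    qed
  qed
  define c where "c = (\<lambda>\<beta>. c1 (inv inc \<beta>))"
  have r: "(\<Sum>\<beta>\<in>inc ` S1. c \<beta> * monomial_fun \<beta> x) = (\<Sum>\<alpha>\<in>S1. c1 \<alpha> * monomial_fun (inc \<alpha>) x)" for x
    by (simp add: sum.reindex[OF inj_on_subset[OF inj subset_UNIV]] c_def inv_f_f[OF inj])
  have m: "monomial_fun (inc \<alpha>) x = x $ j * monomial_fun \<alpha> x" for \<alpha> x
    unfolding inc_def by (rule monomial_fun_inc)
  have "x $ j * p x = (\<Sum>\<beta>\<in>inc ` S1. c \<beta> * monomial_fun \<beta> x)" for x
    unfolding r m S1(3) by (simp add: sum_distrib_left mult.left_commute)
  then have feq2: "(\<lambda>x. x $ j * p x) = (\<lambda>x. \<Sum>\<beta>\<in>inc ` S1. c \<beta> * monomial_fun \<beta> x)"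
    by (rule ext)
  have deg2: "\<forall>\<beta>\<in>inc ` S1. (\<Sum>i\<in>UNIV. \<beta> i) \<le> Suc d"
  proof
    fix \<beta> assume "\<beta> \<in> inc ` S1"
    then obtain \<alpha> where a: "\<alpha> \<in> S1" "\<beta> = inc \<alpha>" by blast
    have "sum \<beta> UNIV = Suc (sum \<alpha> UNIV)" unfolding a(2) inc_def by (rule sum_inc)
    then show "(\<Sum>i\<in>UNIV. \<beta> i) \<le> Suc d" using S1(2) a(1) by simp
  qed
  show ?thesis unfolding poly_fun_deg_def
    by (intro exI[of _ "inc ` S1"] exI[of _ c] conjI finite_imageI S1(1) deg2 feq2)
qed

lemma pf_inner_pow:
  fixes x :: "real^'n::finite"
  shows "poly_fun_deg k (\<lambda>y. (x \<bullet> y) ^ k)"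
proof (induction k)
  case 0
  then show ?case using pf_const[of 0 1] by simp
next
  case (Suc k)
  have ip: "x \<bullet> y = (\<Sum>i\<in>UNIV. x $ i * y $ i)" for y by (simp add: inner_vec_def)
  have e: "(x \<bullet> y) ^ Suc k = (\<Sum>i\<in>UNIV. x $ i * (y $ i * (x \<bullet> y) ^ k))" for y
  proof -
    have "(x \<bullet> y) ^ Suc k = (\<Sum>i\<in>UNIV. x $ i * y $ i) * (x \<bullet> y) ^ k" by (metis ip power_Suc)
    also have "\<dots> = (\<Sum>i\<in>UNIV. x $ i * (y $ i * (x \<bullet> y) ^ k))" by (simp add: sum_distrib_right mult.assoc)
    finally show ?thesis .
  qed
  have "(\<lambda>y. (x \<bullet> y) ^ Suc k) = (\<lambda>y. \<Sum>i\<in>UNIV. x $ i * (y $ i * (x \<bullet> y) ^ k))"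
    by (rule ext) (rule e)
  moreover have "poly_fun_deg (Suc k) (\<lambda>y. \<Sum>i\<in>UNIV. x $ i * (y $ i * (x \<bullet> y) ^ k))"
    by (intro pf_sum pf_cmult pf_coord_mult Suc) auto
  ultimately show ?case by simp
qed

lemma pf_poly:
  fixes x :: "real^'n::finite" and f :: "real poly"
  assumes "degree f \<le> \<tau>"
  shows "poly_fun_deg \<tau> (\<lambda>y. poly f (x \<bullet> y))"
proof -
  have "(\<lambda>y. poly f (x \<bullet> y)) = (\<lambda>y. \<Sum>k\<le>degree f. coeff f k * (x \<bullet> y) ^ k)"
    by (simp add: poly_altdef)
  moreover have pk: "poly_fun_deg \<tau> (\<lambda>y. (x \<bullet> y) ^ k)" if "k \<in> {..degree f}" for k
    using pf_mono[OF pf_inner_pow[of k x]] that assms by simp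
  have "poly_fun_deg \<tau> (\<lambda>y. \<Sum>k\<le>degree f. coeff f k * (x \<bullet> y) ^ k)"
    by (rule pf_sum) (auto intro: pf_cmult pk)
  ultimately show ?thesis by simp
qed


lemma bdd_integrable:
  fixes f :: "real^'n \<Rightarrow> real"
  assumes f: "f \<in> borel_measurable borel" and S: "S \<in> lmeasurable" and b: "\<And>y. y \<in> S \<Longrightarrow> \<bar>f y\<bar> \<le> K"
  shows "f integrable_on S"
proof (rule measurable_bounded_by_integrable_imp_integrable_real[of f S "\<lambda>_. K"])
  have "f \<in> borel_measurable lborel" using f by simp
  then have "f \<in> borel_measurable lebesgue" by (rule measurable_completion)
  then show "f \<in> borel_measurable (lebesgue_on S)" by (rule measurable_restrict_space1)
  show "(\<lambda>_. K) integrable_on S" by (rule integrable_on_const[OF S])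
  show "S \<in> sets lebesgue" using S by (simp add: fmeasurable_def)
qed (use b in auto)

lemma int_cmul': "f integrable_on S \<Longrightarrow> (\<lambda>x. (c::real) * f x) integrable_on S"
  using integrable_cmul[of f S c] by simp

lemma ball_sub_cbox: "ball (0::real^'n) r \<subseteq> cbox (- (r *\<^sub>R One)) (r *\<^sub>R One)"
proof
  fix y :: "real^'n" assume "y \<in> ball 0 r"
  then have y: "norm y < r" by simp
  show "y \<in> cbox (- (r *\<^sub>R One)) (r *\<^sub>R One)"
    unfolding mem_box
  proof
    fix i :: "real^'n" assume i: "i \<in> Basis"
    have "\<bar>y \<bullet> i\<bar> \<le> norm y" using Basis_le_norm[OF i] .
    then show "(- (r *\<^sub>R One)) \<bullet> i \<le> y \<bullet> i \<and> y \<bullet> i \<le> (r *\<^sub>R One) \<bullet> i"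
      using i y by (auto simp: inner_minus_left abs_le_iff)
  qed
qed

lemma scale_ball:
  fixes f :: "real^'n \<Rightarrow> real"
  assumes r: "r > 0" and I: "(f has_integral I) (ball 0 r)"
  shows "((\<lambda>z. f (r *\<^sub>R z)) has_integral (I / r ^ CARD('n))) (ball 0 1)"
proof -
  let ?a = "- (r *\<^sub>R One) :: real^'n" and ?b = "r *\<^sub>R One :: real^'n"
  let ?g = "\<lambda>y. if y \<in> ball 0 r then f y else 0"
  have 1: "(?g has_integral I) (cbox ?a ?b)"
    using has_integral_restrict[OF ball_sub_cbox[of r]] I by blast
  have 2: "((\<lambda>z. ?g (r *\<^sub>R z + 0)) has_integral (I /\<^sub>R r ^ DIM(real^'n))) (cbox ((?a - 0) /\<^sub>R r) ((?b - 0) /\<^sub>R r))"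
    by (rule has_integral_affinity'[OF 1 r])
  have eq: "(\<lambda>z. ?g (r *\<^sub>R z + 0)) = (\<lambda>z. if z \<in> ball 0 1 then f (r *\<^sub>R z) else 0)"
    using r by (auto simp: fun_eq_iff)
  have box: "cbox ((?a - 0) /\<^sub>R r) ((?b - 0) /\<^sub>R r) = cbox (- (1 *\<^sub>R One)) (1 *\<^sub>R One)"
    using r by simp
  have "((\<lambda>z. if z \<in> ball 0 1 then f (r *\<^sub>R z) else 0) has_integral (I /\<^sub>R r ^ CARD('n))) (cbox (- (1 *\<^sub>R One)) (1 *\<^sub>R One))"
    using 2 unfolding eq box by simp
  then have "((\<lambda>z. f (r *\<^sub>R z)) has_integral (I /\<^sub>R r ^ CARD('n))) (ball 0 1)"
    using has_integral_restrict[OF ball_sub_cbox[of 1]] by blast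
  then show ?thesis by (simp add: divide_inverse_commute)
qed

lemma lim_geom: "((\<lambda>r::real. \<Sum>i<N. r^i) \<longlongrightarrow> real N) (at_right 1)"
proof -
  have "((\<lambda>r::real. \<Sum>i<N. r^i) \<longlongrightarrow> (\<Sum>i<N. 1^i)) (at_right 1)"
    by (intro tendsto_sum tendsto_power tendsto_ident_at)
  then show ?thesis by simp
qed

lemma lim_pow1: "((\<lambda>r::real. r^m) \<longlongrightarrow> 1) (at_right 1)"
proof -
  have "((\<lambda>r::real. r^m) \<longlongrightarrow> 1^m) (at_right 1)"
    by (intro tendsto_power tendsto_ident_at)
  then show ?thesis by simp
qed

lemma hom_nonneg:
  fixes g :: "real^'n \<Rightarrow> real"
  assumes meas: "g \<in> borel_measurable borel" and hom: "\<And>c y. c > 0 \<Longrightarrow> g (c *\<^sub>R y) = g y"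
    and nn: "\<And>y. 0 \<le> g y" and bd: "\<And>y. g y \<le> K"
  shows "(real CARD('n) + real m) * integral (ball 0 1) (\<lambda>y. norm y ^ m * g y) = real CARD('n) * integral (ball 0 1) g"
proof -
  let ?n = "CARD('n)"
  define F where "F = (\<lambda>y::real^'n. norm y ^ m * g y)"
  define G where "G r = integral (ball 0 r) F" for r
  define H where "H r = integral (ball 0 r) g" for r
  have measF: "F \<in> borel_measurable borel" unfolding F_def using meas by measurable
  have intg: "g integrable_on S" if "S \<in> lmeasurable" for S
    by (rule bdd_integrable[OF meas that, of K]) (use nn bd in auto)
  have intF: "F integrable_on ball 0 r" if "r > 0" for r
  proof (rule bdd_integrable[OF measF lmeasurable_ball, of _ _ "r^m * K"])
    fix y :: "real^'n" assume "y \<in> ball 0 r"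
    then have "norm y ^ m \<le> r ^ m" by (simp add: power_mono)
    then show "\<bar>F y\<bar> \<le> r ^ m * K"
      unfolding F_def using nn[of y] bd[of y] that by (simp add: abs_mult mult_mono)
  qed
  have Hs: "H r = r ^ ?n * H 1" if r: "r > 0" for r
  proof -
    have "((\<lambda>z. g (r *\<^sub>R z)) has_integral (H r / r ^ ?n)) (ball 0 1)"
      unfolding H_def by (rule scale_ball[OF r integrable_integral[OF intg[OF lmeasurable_ball]]])
    then have "(g has_integral (H r / r ^ ?n)) (ball 0 1)" using hom[OF r] by simp
    then have "H 1 = H r / r ^ ?n" unfolding H_def by (simp add: integral_unique)
    then show ?thesis using r by simp
  qed
  have Gs: "G r = r ^ (?n + m) * G 1" if r: "r > 0" for r
  proof -
    have "((\<lambda>z. F (r *\<^sub>R z)) has_integral (G r / r ^ ?n)) (ball 0 1)"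
      unfolding G_def by (rule scale_ball[OF r integrable_integral[OF intF[OF r]]])
    moreover have "F (r *\<^sub>R z) = r ^ m * F z" for z
      unfolding F_def using r hom[OF r] by (simp add: power_mult_distrib)
    ultimately have "((\<lambda>z. r ^ m * F z) has_integral (G r / r ^ ?n)) (ball 0 1)" by simp
    moreover have "((\<lambda>z. r ^ m * F z) has_integral (r ^ m * G 1)) (ball 0 1)"
      unfolding G_def by (rule has_integral_mult_right[OF integrable_integral[OF intF]]) simp
    ultimately have "G r / r ^ ?n = r ^ m * G 1" by (rule has_integral_unique)
    then show ?thesis using r by (simp add: field_simps power_add)
  qed
  have shell: "H r - H 1 \<le> G r - G 1 \<and> G r - G 1 \<le> r ^ m * (H r - H 1)" if r: "r > 1" for r
  proof -
    let ?S = "ball (0::real^'n) r - ball 0 1"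
    have "ball (0::real^'n) 1 \<subseteq> ball 0 r" using r by (intro subset_ball) simp
    then have "ball (0::real^'n) 1 - ball 0 r = {}" by blast
    then have neg: "negligible (ball (0::real^'n) 1 - ball 0 r)" by simp
    have iF: "F integrable_on ?S"
      by (rule integrable_setdiff[OF integrable_integral[OF intF] integrable_integral[OF intF] neg]) (use r in auto)
    have ig: "g integrable_on ?S"
      by (rule integrable_setdiff[OF integrable_integral[OF intg] integrable_integral[OF intg] neg]) auto
    have eF: "integral ?S F = G r - G 1"
      unfolding G_def by (rule integral_setdiff[OF intF intF neg]) (use r in auto)
    have eg: "integral ?S g = H r - H 1"
      unfolding H_def by (rule integral_setdiff[OF intg intg neg]) auto
    have lo: "integral ?S g \<le> integral ?S F"
    proof (rule integral_le[OF ig iF])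
      fix y assume "y \<in> ?S"
      then have "1 \<le> norm y" by simp
      then have "1 \<le> norm y ^ m" by (simp add: one_le_power)
      then show "g y \<le> F y" unfolding F_def using nn[of y] by (metis mult_1 mult_right_mono)
    qed
    have hi: "integral ?S F \<le> integral ?S (\<lambda>y. r ^ m * g y)"
    proof (rule integral_le[OF iF int_cmul'[OF ig]])
      fix y assume "y \<in> ?S"
      then have "norm y ^ m \<le> r ^ m" by (simp add: power_mono)
      then show "F y \<le> r ^ m * g y" unfolding F_def using nn[of y] by (simp add: mult_right_mono)
    qed
    have "integral ?S (\<lambda>y. r ^ m * g y) = r ^ m * integral ?S g" by simp
    then show ?thesis using lo hi eF eg by simp
  qed
  have ineq: "(\<Sum>i<?n. r^i) * H 1 \<le> (\<Sum>i<?n+m. r^i) * G 1 \<and> (\<Sum>i<?n+m. r^i) * G 1 \<le> r ^ m * ((\<Sum>i<?n. r^i) * H 1)"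
    if r: "r > 1" for r
  proof -
    have "H r - H 1 = (r ^ ?n - 1) * H 1" using Hs[of r] r by (simp add: algebra_simps)
    also have "\<dots> = (r - 1) * ((\<Sum>i<?n. r^i) * H 1)" by (simp add: power_diff_1_eq)
    finally have h: "H r - H 1 = (r - 1) * ((\<Sum>i<?n. r^i) * H 1)" .
    have "G r - G 1 = (r ^ (?n+m) - 1) * G 1" using Gs[of r] r by (simp add: algebra_simps)
    also have "\<dots> = (r - 1) * ((\<Sum>i<?n+m. r^i) * G 1)" by (simp add: power_diff_1_eq)
    finally have g: "G r - G 1 = (r - 1) * ((\<Sum>i<?n+m. r^i) * G 1)" .
    have s1: "(r - 1) * ((\<Sum>i<?n. r^i) * H 1) \<le> (r - 1) * ((\<Sum>i<?n+m. r^i) * G 1)"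
      using shell[OF r] unfolding h g by simp
    have s2: "(r - 1) * ((\<Sum>i<?n+m. r^i) * G 1) \<le> (r - 1) * (r ^ m * ((\<Sum>i<?n. r^i) * H 1))"
      using shell[OF r] unfolding h g by (simp add: mult.left_commute)
    from s1 s2 show ?thesis using r by (simp add: mult_le_cancel_left_pos)
  qed
  have L1: "((\<lambda>r::real. (\<Sum>i<?n. r^i) * H 1) \<longlongrightarrow> real ?n * H 1) (at_right 1)"
    by (rule tendsto_mult_right[OF lim_geom])
  have L2: "((\<lambda>r::real. (\<Sum>i<?n+m. r^i) * G 1) \<longlongrightarrow> real (?n + m) * G 1) (at_right 1)"
    by (rule tendsto_mult_right[OF lim_geom])
  have L3': "((\<lambda>r::real. r ^ m * ((\<Sum>i<?n. r^i) * H 1)) \<longlongrightarrow> 1 * (real ?n * H 1)) (at_right 1)"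
    by (rule tendsto_mult[OF lim_pow1 L1])
  then have L3: "((\<lambda>r::real. r ^ m * ((\<Sum>i<?n. r^i) * H 1)) \<longlongrightarrow> real ?n * H 1) (at_right 1)"
    by simp
  have ev: "eventually (\<lambda>r::real. r > 1) (at_right 1)"
    by (simp add: eventually_at_right_less)
  have a: "real ?n * H 1 \<le> real (?n + m) * G 1"
    by (rule tendsto_le[OF trivial_limit_at_right_real L2 L1]) (use ev ineq in \<open>auto elim: eventually_mono\<close>)
  have b: "real (?n + m) * G 1 \<le> real ?n * H 1"
    by (rule tendsto_le[OF trivial_limit_at_right_real L3 L2]) (use ev ineq in \<open>auto elim: eventually_mono\<close>)
  from a b show ?thesis unfolding G_def H_def F_def by simp
qed


lemma translate_supp:
  fixes f :: "real^'n \<Rightarrow> real"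
  assumes I: "(f has_integral I) (cbox a b)" and z: "\<And>y. y \<notin> cbox a b \<Longrightarrow> f y = 0"
  shows "((\<lambda>y. f (y + c)) has_integral I) UNIV"
proof -
  have "((\<lambda>y. f (1 *\<^sub>R y + c)) has_integral (I /\<^sub>R 1 ^ DIM(real^'n))) (cbox ((a - c) /\<^sub>R 1) ((b - c) /\<^sub>R 1))"
    by (rule has_integral_affinity'[OF I]) simp
  then have 1: "((\<lambda>y. f (y + c)) has_integral I) (cbox (a - c) (b - c))" by simp
  have mem: "y + c \<in> cbox a b \<longleftrightarrow> y \<in> cbox (a - c) (b - c)" for y
    unfolding mem_box inner_add_left inner_diff_left by (intro ball_cong refl) auto
  show ?thesis
    by (rule has_integral_on_superset[OF 1]) (use z mem in auto)
qed

definition psi :: "real \<Rightarrow> real" where "psi u = (max 0 u)^2"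

lemma psi_deriv: "(psi has_real_derivative 2 * max 0 u) (at u)"
proof (cases "u = 0")
  case True
  have "((\<lambda>y. (psi y - psi 0) / (y - 0)) \<longlongrightarrow> 0) (at 0)"
  proof (rule Lim_null_comparison)
    have b: "norm ((psi y - psi 0) / (y - 0)) \<le> \<bar>y\<bar>" for y
    proof (cases "y > 0")
      case True
      then have "psi y = y * y" "psi 0 = 0" by (simp_all add: psi_def power2_eq_square)
      then show ?thesis using True by simp
    next
      case False
      then have "psi y = 0" "psi 0 = 0" by (simp_all add: psi_def max_def)
      then show ?thesis by simp
    qed
    show "eventually (\<lambda>y. norm ((psi y - psi 0) / (y - 0)) \<le> \<bar>y\<bar>) (at 0)"
      by (intro always_eventually allI b)
    show "((\<lambda>y. \<bar>y\<bar>) \<longlongrightarrow> 0) (at (0::real))"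
      using tendsto_rabs[OF tendsto_ident_at[of 0 UNIV]] by simp
  qed
  then show ?thesis using True by (simp add: has_field_derivative_iff)
next
  case False
  show ?thesis
  proof (cases "u > 0")
    case True
    have "((\<lambda>v. v^2) has_real_derivative 2 * u) (at u)" by (auto intro!: derivative_eq_intros)
    then have "(psi has_real_derivative 2 * u) (at u)"
      by (rule has_field_derivative_transform_within_open[of _ _ _ "{0<..}"]) (use True in \<open>auto simp: psi_def\<close>)
    then show ?thesis using True by simp
  next
    case False2: False
    have "((\<lambda>v. 0) has_real_derivative 0) (at u)" by simp
    then have "(psi has_real_derivative 0) (at u)"
      by (rule has_field_derivative_transform_within_open[of _ _ _ "{..<0}"]) (use False False2 in \<open>auto simp: psi_def\<close>)
    then show ?thesis using False False2 by simp
  qed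
qed

lemma der_bound:
  fixes s u :: real
  assumes "\<bar>s\<bar> \<le> 1" "0 \<le> u" "u \<le> 1"
  shows "abs (real j * s^(j-1) * u^2 + s^j * (2 * u) * (- 2 * s)) \<le> real j + 4"
proof -
  have a: "\<bar>s\<bar>^(j-1) \<le> 1" by (rule power_le_one) (use assms in auto)
  have b: "u^2 \<le> 1" by (rule power_le_one) (use assms in auto)
  have c: "\<bar>s\<bar>^(j+1) \<le> 1" by (rule power_le_one) (use assms in auto)
  have "abs (real j * s^(j-1) * u^2) = real j * (\<bar>s\<bar>^(j-1) * u^2)" by (simp add: abs_mult power_abs)
  also have "\<dots> \<le> real j * (1 * 1)"
    by (intro mult_left_mono mult_mono a b) (use assms in auto)
  finally have 1: "abs (real j * s^(j-1) * u^2) \<le> real j" by simp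
  have "abs (s^j * (2 * u) * (- 2 * s)) = 4 * (\<bar>s\<bar>^(j+1) * u)" using assms by (simp add: abs_mult power_abs)
  also have "\<dots> \<le> 4 * (1 * 1)"
    by (intro mult_left_mono mult_mono c) (use assms in auto)
  finally have 2: "abs (s^j * (2 * u) * (- 2 * s)) \<le> 4" by simp
  show ?thesis using 1 2 abs_triangle_ineq[of "real j * s^(j-1) * u^2" "s^j * (2 * u) * (- 2 * s)"] by linarith
qed

definition Der :: "nat \<Rightarrow> real^'n \<Rightarrow> real^'n \<Rightarrow> real" where
  "Der j x z = real j * (x \<bullet> z)^(j-1) * psi (1 - (norm z)^2) + (x \<bullet> z)^j * (2 * max 0 (1 - (norm z)^2)) * (- 2 * (x \<bullet> z))"

lemma Der_bound:
  fixes x z :: "real^'n"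
  assumes x: "norm x = 1"
  shows "abs (Der j x z) \<le> real j + 4"
proof (cases "norm z < 1")
  case True
  have s: "\<bar>x \<bullet> z\<bar> \<le> 1"
    using Cauchy_Schwarz_ineq2[of x z] x True by simp
  have u: "0 \<le> 1 - (norm z)^2" "1 - (norm z)^2 \<le> 1"
    using True by (auto simp: power_le_one abs_square_le_1)
  have "Der j x z = real j * (x \<bullet> z)^(j-1) * (1 - (norm z)^2)^2 + (x \<bullet> z)^j * (2 * (1 - (norm z)^2)) * (- 2 * (x \<bullet> z))"
    unfolding Der_def psi_def using u by simp
  then show ?thesis using der_bound[OF s u] by simp
next
  case False
  then have "1 - (norm z)^2 \<le> 0" by (simp add: abs_square_le_1 not_less one_le_power)
  then show ?thesis unfolding Der_def psi_def by simp
qed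

lemma ibp:
  fixes x :: "real^'n"
  assumes x: "norm x = 1"
  shows "integral (ball 0 1) (\<lambda>y. real j * (x \<bullet> y)^(j - 1) * (1 - (norm y)^2)^2 - 4 * (x \<bullet> y)^(j+1) * (1 - (norm y)^2)) = 0"
proof -
  define Phi where "Phi y = (x \<bullet> y)^j * psi (1 - (norm y)^2)" for y :: "real^'n"
  have xx: "x \<bullet> x = 1" using x by (simp add: power2_norm_eq_inner[symmetric])
  have nrm: "(norm (y + t *\<^sub>R x))^2 = (norm y)^2 + 2 * t * (x \<bullet> y) + t^2" for y t
    unfolding power2_norm_eq_inner by (simp add: inner_add_left inner_add_right xx inner_commute algebra_simps power2_eq_square)
  have xin: "x \<bullet> (y + t *\<^sub>R x) = x \<bullet> y + t" for y t by (simp add: inner_add_right xx)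
  have deriv: "((\<lambda>t. Phi (y + t *\<^sub>R x)) has_real_derivative Der j x (y + t *\<^sub>R x)) (at t)" for y t
  proof -
    have e: "(\<lambda>t. Phi (y + t *\<^sub>R x)) = (\<lambda>t. (x \<bullet> y + t)^j * psi (1 - ((norm y)^2 + 2*t*(x \<bullet> y) + t^2)))"
      by (simp add: Phi_def xin nrm)
    have d1: "((\<lambda>t. (x \<bullet> y + t)^j) has_real_derivative real j * (x \<bullet> y + t)^(j-1)) (at t)"
      by (auto intro!: derivative_eq_intros)
    have d2: "((\<lambda>t. psi (1 - ((norm y)^2 + 2*t*(x \<bullet> y) + t^2))) has_real_derivative
        2 * max 0 (1 - ((norm y)^2 + 2*t*(x \<bullet> y) + t^2)) * (- (2 * (x \<bullet> y) + 2 * t))) (at t)"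
      by (rule DERIV_chain2[OF psi_deriv]) (auto intro!: derivative_eq_intros)
    have "((\<lambda>t. (x \<bullet> y + t)^j * psi (1 - ((norm y)^2 + 2*t*(x \<bullet> y) + t^2))) has_real_derivative
        real j * (x \<bullet> y + t)^(j-1) * psi (1 - ((norm y)^2 + 2*t*(x \<bullet> y) + t^2)) +
        2 * max 0 (1 - ((norm y)^2 + 2*t*(x \<bullet> y) + t^2)) * (- (2 * (x \<bullet> y) + 2 * t)) * (x \<bullet> y + t)^j) (at t)"
      by (rule DERIV_mult[OF d1 d2])
    moreover have "real j * (x \<bullet> y + t)^(j-1) * psi (1 - ((norm y)^2 + 2*t*(x \<bullet> y) + t^2)) +
        2 * max 0 (1 - ((norm y)^2 + 2*t*(x \<bullet> y) + t^2)) * (- (2 * (x \<bullet> y) + 2 * t)) * (x \<bullet> y + t)^j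
        = Der j x (y + t *\<^sub>R x)"
      unfolding Der_def xin nrm by (simp add: algebra_simps)
    ultimately show ?thesis unfolding e by simp
  qed
  have Phi0: "Phi y = 0" if "norm y \<ge> 1" for y
  proof -
    have "1 - (norm y)^2 \<le> 0" using that by (simp add: one_le_power)
    then show ?thesis unfolding Phi_def psi_def by simp
  qed
  have contPhi: "continuous_on UNIV Phi"
    unfolding Phi_def psi_def by (intro continuous_intros)
  have sub1: "ball (0::real^'n) 1 \<subseteq> cbox (- One) One" using ball_sub_cbox[of 1] by simp
  have outside: "Phi y = 0" if "y \<notin> cbox (- One) One" for y
  proof -
    have "y \<notin> ball 0 1" using that sub1 by blast
    then have "norm y \<ge> 1" by simp
    then show ?thesis by (rule Phi0)
  qed
  have "Phi integrable_on cbox (- One) One"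
    by (rule integrable_continuous[OF continuous_on_subset[OF contPhi subset_UNIV]])
  then obtain IP where IP: "(Phi has_integral IP) (cbox (- One) One)"
    unfolding integrable_on_def by blast
  have IPU: "(Phi has_integral IP) UNIV"
    by (rule has_integral_on_superset[OF IP]) (use outside in auto)
  define h where "h k = inverse (real (Suc k))" for k
  have hpos: "0 < h k" "h k \<le> 1" for k unfolding h_def by (simp_all add: inverse_le_1_iff)
  define f where "f k y = (Phi (y + h k *\<^sub>R x) - Phi y) / h k" for k y
  have fint: "(f k has_integral 0) UNIV" for k
  proof -
    have "((\<lambda>y. Phi (y + h k *\<^sub>R x)) has_integral IP) UNIV"
      by (rule translate_supp[OF IP outside])
    then have "((\<lambda>y. Phi (y + h k *\<^sub>R x) - Phi y) has_integral (IP - IP)) UNIV"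
      by (rule has_integral_diff[OF _ IPU])
    then have "((\<lambda>y. inverse (h k) * (Phi (y + h k *\<^sub>R x) - Phi y)) has_integral (inverse (h k) * (IP - IP))) UNIV"
      by (rule has_integral_mult_right)
    then show ?thesis unfolding f_def by (simp add: divide_inverse mult.commute)
  qed
  define bd where "bd y = (if y \<in> cball 0 2 then real j + 4 else 0)" for y :: "real^'n"
  have bdint: "bd integrable_on UNIV"
    unfolding bd_def integrable_restrict_UNIV by (rule integrable_on_const) simp
  have fbd: "norm (f k y) \<le> bd y" for k y
  proof (cases "y \<in> cball 0 2")
    case True
    have "\<exists>z. 0 < z \<and> z < h k \<and> Phi (y + h k *\<^sub>R x) - Phi (y + 0 *\<^sub>R x) = (h k - 0) * Der j x (y + z *\<^sub>R x)"
      by (rule MVT2[of 0 "h k" "\<lambda>t. Phi (y + t *\<^sub>R x)" "\<lambda>t. Der j x (y + t *\<^sub>R x)"]) (use hpos[of k] deriv in auto)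
    then obtain z where z: "0 < z" "z < h k" "Phi (y + h k *\<^sub>R x) - Phi (y + 0 *\<^sub>R x) = (h k - 0) * Der j x (y + z *\<^sub>R x)"
      by blast
    then have "f k y = Der j x (y + z *\<^sub>R x)" unfolding f_def using hpos[of k] by simp
    then show ?thesis using Der_bound[OF x] True unfolding bd_def by simp
  next
    case False
    then have n2: "norm y > 2" by simp
    have "norm (y + h k *\<^sub>R x) \<ge> norm y - norm (h k *\<^sub>R x)" by (rule norm_diff_ineq)
    moreover have "norm (h k *\<^sub>R x) \<le> 1" using hpos[of k] x by simp
    ultimately have "norm (y + h k *\<^sub>R x) \<ge> 1" using n2 by linarith
    then have "Phi (y + h k *\<^sub>R x) = 0" by (rule Phi0)
    moreover have "Phi y = 0" using n2 by (intro Phi0) simp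
    ultimately have "f k y = 0" unfolding f_def by simp
    then show ?thesis unfolding bd_def using False by simp
  qed
  define D where "D y = Der j x y" for y
  have conv: "(\<lambda>k. f k y) \<longlonglongrightarrow> D y" for y
  proof -
    have "((\<lambda>t. (Phi (y + t *\<^sub>R x) - Phi (y + 0 *\<^sub>R x)) / (t - 0)) \<longlongrightarrow> Der j x (y + 0 *\<^sub>R x)) (at 0)"
      using deriv[of y 0] by (simp only: has_field_derivative_iff)
    then have L: "((\<lambda>t. (Phi (y + t *\<^sub>R x) - Phi y) / t) \<longlongrightarrow> D y) (at 0)" unfolding D_def by simp
    have hne: "h k \<noteq> 0" for k using hpos(1)[of k] by simp
    have "h \<longlonglongrightarrow> 0" unfolding h_def by (rule LIMSEQ_inverse_real_of_nat)
    moreover have "eventually (\<lambda>k. h k \<in> UNIV \<and> h k \<noteq> 0) sequentially"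
      by (intro always_eventually allI) (simp add: hne)
    ultimately have hl: "filterlim h (at 0) sequentially" unfolding filterlim_at by blast
    have "((\<lambda>k. (Phi (y + h k *\<^sub>R x) - Phi y) / h k) \<longlongrightarrow> D y) sequentially"
      by (rule filterlim_compose[OF L hl])
    then show ?thesis unfolding f_def .
  qed
  have fi: "f k integrable_on UNIV" for k using fint[of k] unfolding integrable_on_def by blast
  have fbd': "\<And>k y. y \<in> UNIV \<Longrightarrow> norm (f k y) \<le> bd y" using fbd by blast
  have conv': "\<And>y. y \<in> UNIV \<Longrightarrow> (\<lambda>k. f k y) \<longlonglongrightarrow> D y" using conv by blast
  note dc = dominated_convergence[of f UNIV bd D, OF fi bdint fbd' conv']
  have "(\<lambda>k. integral UNIV (f k)) = (\<lambda>k. 0)" by (rule ext) (rule integral_unique[OF fint])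
  then have I0: "integral UNIV D = 0" using dc(2) by (simp add: LIMSEQ_const_iff)
  have Deq: "D = (\<lambda>y. if y \<in> ball 0 1 then real j * (x \<bullet> y)^(j - 1) * (1 - (norm y)^2)^2 - 4 * (x \<bullet> y)^(j+1) * (1 - (norm y)^2) else 0)"
  proof
    fix y :: "real^'n"
    show "D y = (if y \<in> ball 0 1 then real j * (x \<bullet> y)^(j - 1) * (1 - (norm y)^2)^2 - 4 * (x \<bullet> y)^(j+1) * (1 - (norm y)^2) else 0)"
    proof (cases "norm y < 1")
      case True
      then have u: "0 \<le> 1 - (norm y)^2" by (simp add: power_le_one)
      show ?thesis unfolding D_def Der_def psi_def using True u by (simp add: algebra_simps)
    next
      case False
      then have "1 - (norm y)^2 \<le> 0" by (simp add: one_le_power)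
      then show ?thesis unfolding D_def Der_def psi_def using False by simp
    qed
  qed
  have "integral UNIV (\<lambda>y. if y \<in> ball 0 1 then real j * (x \<bullet> y)^(j - 1) * (1 - (norm y)^2)^2 - 4 * (x \<bullet> y)^(j+1) * (1 - (norm y)^2) else 0) = 0"
    using I0 unfolding Deq .
  then show ?thesis unfolding Henstock_Kurzweil_Integration.integral_restrict_UNIV .
qed


lemma alg_rec:
  fixes N a A B c d0 d1 d2 e1 e2 :: real
  assumes N: "N > 0" and a: "a > 0" and d: "d0 = a" "d1 = a + 2" "d2 = a + 4" "e1 = a + 2" "e2 = a + 4"
    and h: "c * (N * A / d0) - 2 * c * (N * A / d1) + c * (N * A / d2) - 4 * (N * B / e1) + 4 * (N * B / e2) = 0"
  shows "a * B = c * A"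
proof -
  define P where "P = a * (a + 2) * (a + 4)"
  have p: "a \<noteq> 0" "a + 2 \<noteq> 0" "a + 4 \<noteq> 0" using a by auto
  have t1: "c * (N * A / a) * P = c * N * A * ((a+2)*(a+4))" unfolding P_def using p by (simp add: field_simps)
  have t2: "2 * c * (N * A / (a+2)) * P = 2 * c * N * A * (a*(a+4))" unfolding P_def using p by (simp add: field_simps)
  have t3: "c * (N * A / (a+4)) * P = c * N * A * (a*(a+2))" unfolding P_def using p by (simp add: field_simps)
  have t4: "4 * (N * B / (a+2)) * P = 4 * N * B * (a*(a+4))" unfolding P_def using p by (simp add: field_simps)
  have t5: "4 * (N * B / (a+4)) * P = 4 * N * B * (a*(a+2))" unfolding P_def using p by (simp add: field_simps)
  have "(c * (N * A / a) - 2 * c * (N * A / (a+2)) + c * (N * A / (a+4)) - 4 * (N * B / (a+2)) + 4 * (N * B / (a+4))) * P = 0"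
    using h unfolding d by simp
  then have "c * N * A * ((a+2)*(a+4)) - 2 * c * N * A * (a*(a+4)) + c * N * A * (a*(a+2)) - 4 * N * B * (a*(a+4)) + 4 * N * B * (a*(a+2)) = 0"
    by (simp only: distrib_right left_diff_distrib t1 t2 t3 t4 t5)
  moreover have "c * N * A * ((a+2)*(a+4)) - 2 * c * N * A * (a*(a+4)) + c * N * A * (a*(a+2)) - 4 * N * B * (a*(a+4)) + 4 * N * B * (a*(a+2))
     = 8 * N * (c * A - a * B)" by algebra
  ultimately have "N * (c * A - a * B) = 0" by simp
  then show ?thesis using N by simp
qed
lemma alg_one:
  fixes N A d1 d2 :: real
  assumes N: "N > 0" and d: "d1 > 0" "d2 > 0" "d1 \<noteq> d2" and h: "N * A / d1 = N * A / d2"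
  shows "A = 0"
proof -
  have "N * A * d2 = N * A * d1" using h d by (simp add: field_simps)
  then have "N * A * (d2 - d1) = 0" by (simp add: algebra_simps)
  then show ?thesis using N d by simp
qed

definition gk :: "real^'n \<Rightarrow> nat \<Rightarrow> real^'n \<Rightarrow> real" where
  "gk x k y = ((x \<bullet> y) / norm y)^k"

definition Am :: "real^'n \<Rightarrow> nat \<Rightarrow> real" where
  "Am x k = integral (ball 0 1) (gk x k)"

lemma gk_meas: "gk x k \<in> borel_measurable borel"
  unfolding gk_def by measurable

lemma inner_le_norm1: "norm (x::real^'n) = 1 \<Longrightarrow> abs (x \<bullet> y) \<le> norm y"
  using Cauchy_Schwarz_ineq2[of x y] by simp

lemma gk_bound:
  assumes "norm x = 1" shows "abs (gk x k y) \<le> 1"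
proof (cases "y = 0")
  case True then show ?thesis by (simp add: gk_def power_0_left)
next
  case False
  have "abs (x \<bullet> y) / norm y \<le> 1" using inner_le_norm1[OF assms, of y] False by simp
  then have "abs ((x \<bullet> y) / norm y) \<le> 1" by (simp add: abs_div_pos)
  then have "abs ((x \<bullet> y) / norm y) ^ k \<le> 1" by (simp add: power_le_one)
  then show ?thesis unfolding gk_def by (simp add: power_abs)
qed

lemma gk_hom: "c > 0 \<Longrightarrow> gk x k (c *\<^sub>R y) = gk x k y"
  unfolding gk_def by (simp add: inner_scaleR_right)

lemma card_pos_real: "0 < real CARD('n::finite)" by (simp add: finite_UNIV_card_ge_0)

lemma int_ball:
  fixes f :: "real^'n \<Rightarrow> real"
  assumes "f \<in> borel_measurable borel" "\<And>y. norm y < 1 \<Longrightarrow> abs (f y) \<le> K"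
  shows "f integrable_on ball 0 1"
  by (rule bdd_integrable[OF assms(1) lmeasurable_ball]) (use assms(2) in simp)

lemma hom_signed:
  fixes g :: "real^'n \<Rightarrow> real"
  assumes meas: "g \<in> borel_measurable borel" and hom: "\<And>c y. c > 0 \<Longrightarrow> g (c *\<^sub>R y) = g y"
    and bd: "\<And>y. abs (g y) \<le> K"
  shows "(real CARD('n) + real m) * integral (ball 0 1) (\<lambda>y. norm y ^ m * g y) = real CARD('n) * integral (ball 0 1) g"
proof -
  have K: "K \<ge> 0" using bd[of 0] by simp
  have nb: "norm y ^ m \<le> 1" if "norm y < 1" for y :: "real^'n" using that by (simp add: power_le_one)
  have nn1: "0 \<le> g y + K" for y using bd[of y] by (simp add: abs_le_iff)
  have bd1: "g y + K \<le> 2 * K" for y using bd[of y] by (simp add: abs_le_iff)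
  have meas1: "(\<lambda>y. g y + K) \<in> borel_measurable borel" using meas by measurable
  have hom1: "\<And>c y. c > 0 \<Longrightarrow> g (c *\<^sub>R y) + K = g y + K" using hom by simp
  have 1: "(real CARD('n) + real m) * integral (ball 0 1) (\<lambda>y. norm y ^ m * (g y + K)) = real CARD('n) * integral (ball 0 1) (\<lambda>y. g y + K)"
    by (rule hom_nonneg[OF meas1 hom1 nn1 bd1])
  have 2: "(real CARD('n) + real m) * integral (ball 0 1) (\<lambda>y::real^'n. norm y ^ m * K) = real CARD('n) * integral (ball 0 1) (\<lambda>y::real^'n. K)"
    by (rule hom_nonneg[of "\<lambda>y::real^'n. K" K]) (simp_all add: K)
  have ig: "g integrable_on ball 0 1" by (rule int_ball[OF meas, of K]) (use bd in auto)
  have iK: "(\<lambda>y::real^'n. K) integrable_on ball 0 1" by (rule int_ball[of _ K]) (use K in auto)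
  have igm: "(\<lambda>y. norm y ^ m * g y) integrable_on ball 0 1"
  proof (rule int_ball[of _ K])
    show "(\<lambda>y. norm y ^ m * g y) \<in> borel_measurable borel" using meas by measurable
    fix y :: "real^'n" assume "norm y < 1"
    then have "norm y ^ m \<le> 1" by (rule nb)
    have "norm y ^ m * abs (g y) \<le> 1 * K" by (rule mult_mono) (use \<open>norm y ^ m \<le> 1\<close> bd[of y] in auto)
    then show "abs (norm y ^ m * g y) \<le> K" by (simp add: abs_mult)
  qed
  have iKm: "(\<lambda>y::real^'n. norm y ^ m * K) integrable_on ball 0 1"
  proof (rule int_ball[of _ K])
    show "(\<lambda>y::real^'n. norm y ^ m * K) \<in> borel_measurable borel" by measurable
    fix y :: "real^'n" assume "norm y < 1"
    then have "norm y ^ m \<le> 1" by (rule nb)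
    then show "abs (norm y ^ m * K) \<le> K" using K by (simp add: abs_mult mult_left_le_one_le)
  qed
  have e1: "integral (ball 0 1) (\<lambda>y. norm y ^ m * (g y + K)) = integral (ball 0 1) (\<lambda>y. norm y ^ m * g y) + integral (ball 0 1) (\<lambda>y::real^'n. norm y ^ m * K)"
    by (simp add: distrib_left integral_add[OF igm iKm])
  have e2: "integral (ball 0 1) (\<lambda>y. g y + K) = integral (ball 0 1) g + integral (ball 0 1) (\<lambda>y::real^'n. K)"
    by (rule integral_add[OF ig iK])
  show ?thesis using 1 2 unfolding e1 e2 by (simp add: algebra_simps)
qed

lemma fT_int:
  assumes "norm (x::real^'n) = 1"
  shows "(\<lambda>y. (x \<bullet> y)^k * (norm y ^ 2)^i) integrable_on ball 0 1"
proof (rule int_ball[of _ 1])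
  show "(\<lambda>y. (x \<bullet> y)^k * (norm y ^ 2)^i) \<in> borel_measurable borel" by measurable
  fix y :: "real^'n" assume y: "norm y < 1"
  have a: "abs (x \<bullet> y) \<le> 1" using inner_le_norm1[OF assms, of y] y by simp
  have "abs ((x \<bullet> y)^k) \<le> 1" unfolding power_abs by (rule power_le_one) (use a in auto)
  moreover have "abs ((norm y ^ 2)^i) \<le> 1" using y by (simp add: power_le_one)
  ultimately show "abs ((x \<bullet> y)^k * (norm y ^ 2)^i) \<le> 1" unfolding abs_mult by (simp add: mult_le_one)
qed

lemma E_hom:
  fixes x :: "real^'n"
  assumes x: "norm x = 1"
  shows "(real CARD('n) + real (k + 2*i)) * integral (ball 0 1) (\<lambda>y::real^'n. (x \<bullet> y)^k * (norm y ^ 2)^i) = real CARD('n) * Am x k"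
proof -
  have eq: "(x \<bullet> y)^k * (norm y ^ 2)^i = norm y ^ (k + 2*i) * gk x k y" for y
  proof (cases "y = 0")
    case True then show ?thesis by (cases k; cases i) (simp_all add: gk_def)
  next
    case False
    then have "norm y \<noteq> 0" by simp
    then have a: "(x \<bullet> y)^k = norm y^k * gk x k y" unfolding gk_def by (simp add: power_divide)
    have b: "(norm y ^ 2)^i = norm y ^ (2*i)" by (simp add: power_mult)
    show ?thesis unfolding a b by (simp add: power_add mult_ac)
  qed
  show ?thesis unfolding eq Am_def
    by (rule hom_signed[OF gk_meas gk_hom gk_bound[OF x]])
qed

definition Tm :: "real^'n \<Rightarrow> nat \<Rightarrow> nat \<Rightarrow> real" where
  "Tm x k i = integral (ball 0 1) (\<lambda>y. (x \<bullet> y)^k * (norm y ^ 2)^i)"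

lemma Tm_val:
  fixes x :: "real^'n"
  assumes x: "norm x = 1"
  shows "Tm x k i = real CARD('n) * Am x k / (real CARD('n) + real k + 2 * real i)"
proof -
  have c: "0 < real CARD('n)" by (rule card_pos_real)
  have d: "real CARD('n) + real k + 2 * real i \<noteq> 0" using c by linarith
  have "(real CARD('n) + real k + 2 * real i) * Tm x k i = real CARD('n) * Am x k"
    using E_hom[OF x, of k i] unfolding Tm_def by (simp add: algebra_simps)
  then show ?thesis using d by (simp add: eq_divide_eq mult.commute)
qed

lemma A_rec:
  fixes x :: "real^'n"
  assumes x: "norm x = 1"
  shows "(real CARD('n) + real k) * Am x (k+2) = (real k + 1) * Am x k"
proof -
  let ?f = "\<lambda>k i y. (x \<bullet> y)^k * (norm y ^ 2)^i"
  have hi: "(?f k i has_integral Tm x k i) (ball 0 1)" for k i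
    unfolding Tm_def using fT_int[OF x] by (rule integrable_integral)
  have pw: "real (Suc k) * (x \<bullet> y)^(Suc k - 1) * (1 - (norm y)^2)^2 - 4 * (x \<bullet> y)^(Suc k + 1) * (1 - (norm y)^2)
     = real (Suc k) * ?f k 0 y - 2 * real (Suc k) * ?f k 1 y + real (Suc k) * ?f k 2 y - 4 * ?f (k+2) 0 y + 4 * ?f (k+2) 1 y" for y
    by (simp add: power2_eq_square algebra_simps)
  have "((\<lambda>y. real (Suc k) * ?f k 0 y - 2 * real (Suc k) * ?f k 1 y + real (Suc k) * ?f k 2 y - 4 * ?f (k+2) 0 y + 4 * ?f (k+2) 1 y)
     has_integral (real (Suc k) * Tm x k 0 - 2 * real (Suc k) * Tm x k 1 + real (Suc k) * Tm x k 2 - 4 * Tm x (k+2) 0 + 4 * Tm x (k+2) 1)) (ball 0 1)"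
    by (intro has_integral_add has_integral_diff has_integral_mult_right hi)
  then have "real (Suc k) * Tm x k 0 - 2 * real (Suc k) * Tm x k 1 + real (Suc k) * Tm x k 2 - 4 * Tm x (k+2) 0 + 4 * Tm x (k+2) 1 = 0"
    using ibp[OF x, of "Suc k"] unfolding pw by (simp add: integral_unique)
  note eq2 = this[unfolded Tm_val[OF x]]
  have c: "0 < real CARD('n)" by (rule card_pos_real)
  have apos: "0 < real CARD('n) + real k" using c by linarith
  have "(real CARD('n) + real k) * Am x (k+2) = real (Suc k) * Am x k"
    by (rule alg_rec[OF c apos _ _ _ _ _ eq2]) simp_all
  then show ?thesis by simp
qed

lemma A1:
  fixes x :: "real^'n"
  assumes x: "norm x = 1"
  shows "Am x 1 = 0"
proof -
  let ?f = "\<lambda>k i y. (x \<bullet> y)^k * (norm y ^ 2)^i"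
  have hi: "(?f k i has_integral Tm x k i) (ball 0 1)" for k i
    unfolding Tm_def using fT_int[OF x] by (rule integrable_integral)
  have pw: "real 0 * (x \<bullet> y)^(0 - 1) * (1 - (norm y)^2)^2 - 4 * (x \<bullet> y)^(0 + 1) * (1 - (norm y)^2)
     = 4 * ?f 1 1 y - 4 * ?f 1 0 y" for y
    by (simp add: algebra_simps)
  have "((\<lambda>y. 4 * ?f 1 1 y - 4 * ?f 1 0 y) has_integral (4 * Tm x 1 1 - 4 * Tm x 1 0)) (ball 0 1)"
    by (intro has_integral_diff has_integral_mult_right hi)
  then have "4 * Tm x 1 1 - 4 * Tm x 1 0 = 0"
    using ibp[OF x, of 0] unfolding pw by (simp add: integral_unique)
  then have e: "Tm x 1 1 = Tm x 1 0" by simp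
  note e2 = e[unfolded Tm_val[OF x]]
  have c: "0 < real CARD('n)" by (rule card_pos_real)
  show ?thesis by (rule alg_one[OF c _ _ _ e2]) (use c in simp_all)
qed

lemma A0:
  fixes x :: "real^'n"
  shows "Am x 0 = measure lebesgue (ball (0::real^'n) 1)" "Am x 0 > 0"
proof -
  have g0: "gk x 0 = (\<lambda>y. 1)" by (rule ext) (simp add: gk_def)
  show a: "Am x 0 = measure lebesgue (ball (0::real^'n) 1)"
    unfolding Am_def g0 by (rule lmeasure_integral[OF lmeasurable_ball, symmetric])
  have "measure lebesgue (ball (0::real^'n) 1) = measure lborel (ball (0::real^'n) 1)" by simp
  then show "Am x 0 > 0" unfolding a using content_ball_pos[of 1 "0::real^'n"] by simp
qed

lemma AQ:
  fixes x :: "real^'n"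
  assumes x: "norm x = 1" and n: "CARD('n) \<ge> 2"
  shows "Am x k * Qm CARD('n) 0 = Qm CARD('n) k * Am x 0"
proof (induction k rule: less_induct)
  case (less k)
  show ?case
  proof (cases k)
    case 0 then show ?thesis by simp
  next
    case (Suc k1)
    show ?thesis
    proof (cases k1)
      case 0 then show ?thesis using Suc A1[OF x] Q1[OF n] by simp
    next
      case (Suc k2)
      have k: "k = k2 + 2" using Suc \<open>k = Suc k1\<close> by simp
      have ih: "Am x k2 * Qm CARD('n) 0 = Qm CARD('n) k2 * Am x 0" using less k by simp
      have ra: "(real CARD('n) + real k2) * Am x (k2+2) = (real k2 + 1) * Am x k2" by (rule A_rec[OF x])
      have rq: "(real CARD('n) + real k2) * Qm CARD('n) (k2+2) = (real k2 + 1) * Qm CARD('n) k2" by (rule Q_rec[OF n])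
      have c: "0 < real CARD('n)" by (rule card_pos_real)
      have pos: "real CARD('n) + real k2 > 0" using c by linarith
      have "(real CARD('n) + real k2) * (Am x (k2+2) * Qm CARD('n) 0) = (real CARD('n) + real k2) * (Qm CARD('n) (k2+2) * Am x 0)"
        using ra rq ih by (metis mult.assoc mult.commute mult.left_commute)
      then show ?thesis using pos k by simp
    qed
  qed
qed

lemma M:
  fixes x :: "real^'n" and p :: "real poly"
  assumes n: "CARD('n) \<ge> 2" and x: "norm x = 1"
  shows "sphere_avg (\<lambda>y. poly p (x \<bullet> y)) = f0 CARD('n) p"
proof -
  let ?n = "CARD('n)"
  have ip: "x \<bullet> (y /\<^sub>R norm y) = (x \<bullet> y) / norm y" for y :: "real^'n"
    by (simp add: inner_scaleR_right divide_inverse mult.commute)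
  have pe: "poly p (x \<bullet> (y /\<^sub>R norm y)) = (\<Sum>k\<le>degree p. coeff p k * gk x k y)" for y
    unfolding ip gk_def by (simp add: poly_altdef)
  have igk: "gk x k integrable_on ball 0 1" for k
    by (rule int_ball[OF gk_meas, where K=1]) (use gk_bound[OF x] in auto)
  have "integral (ball 0 1) (\<lambda>y. poly p (x \<bullet> (y /\<^sub>R norm y))) = (\<Sum>k\<le>degree p. coeff p k * Am x k)"
    unfolding pe Am_def
    by (subst integral_sum) (auto intro!: int_cmul'[OF igk])
  also have "\<dots> = (\<Sum>k\<le>degree p. coeff p k * (Qm ?n k * Am x 0 / Qm ?n 0))"
  proof (rule sum.cong[OF refl])
    fix k
    have "Am x k = Qm ?n k * Am x 0 / Qm ?n 0"
      using AQ[OF x n, of k] Q0_pos[OF n] by (simp add: field_simps)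
    then show "coeff p k * Am x k = coeff p k * (Qm ?n k * Am x 0 / Qm ?n 0)" by simp
  qed
  also have "\<dots> = Am x 0 * ((\<Sum>k\<le>degree p. coeff p k * Qm ?n k) / Qm ?n 0)"
    by (simp add: sum_distrib_left sum_divide_distrib algebra_simps)
  finally have I1: "integral (ball 0 1) (\<lambda>y. poly p (x \<bullet> (y /\<^sub>R norm y))) = Am x 0 * ((\<Sum>k\<le>degree p. coeff p k * Qm ?n k) / Qm ?n 0)" .
  have pw: "poly p t * gegen_weight ?n t = (\<Sum>k\<le>degree p. coeff p k * (t^k * gegen_weight ?n t))" for t
    by (simp add: poly_altdef sum_distrib_right mult.assoc)
  have I2: "integral {-1..1} (\<lambda>t. poly p t * gegen_weight ?n t) = (\<Sum>k\<le>degree p. coeff p k * Qm ?n k)"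
    unfolding pw Qm_def
    by (subst integral_sum) (auto intro!: int_cmul[OF Q_int[OF n]])
  have I3: "integral {-1..1} (gegen_weight ?n) = Qm ?n 0" unfolding Qm_def by simp
  show ?thesis
    unfolding sphere_avg_def f0_def I1 I2 I3 A0(1)[symmetric, of x] using A0(2)[of x] by simp
qed


lemma cont_Max_inner:
  fixes C :: "(real^'n) set"
  assumes "finite C" "C \<noteq> {}"
  shows "continuous_on S (\<lambda>x. Max ((\<lambda>y. x \<bullet> y) ` C))"
  using assms
proof (induction C rule: finite_ne_induct)
  case (singleton a)
  then show ?case by (simp add: continuous_on_inner continuous_on_id continuous_on_const)
next
  case (insert a F)
  have e: "(\<lambda>x. Max ((\<lambda>y. x \<bullet> y) ` insert a F)) = (\<lambda>x. max (x \<bullet> a) (Max ((\<lambda>y. x \<bullet> y) ` F)))"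
    by (rule ext) (simp add: insert.hyps)
  show ?case unfolding e
    by (intro continuous_on_max insert.IH continuous_on_inner continuous_on_id continuous_on_const)
qed

theorem proposition4p2:
  fixes h :: "real \<Rightarrow> ereal" and \<tau> N :: nat and C :: "(real ^ 'n) set" and s :: real
  assumes "CARD('n) \<ge> 2"
    and "\<tau> > 0"
    and "spherical_design \<tau> C" and "card C = N"
    and "s = s_C C"
    and "f \<in> adm CARD('n) s \<tau> h"
  shows "(\<forall>x\<in>usphere. (\<forall>y\<in>C. x \<bullet> y \<in> {-1..s}) \<longrightarrow>
            Ue h x C \<le> ereal (U (poly f) x C) \<and> U (poly f) x C = f0 CARD('n) f * real (card C))
         \<and> Qh h C \<le> (INF g\<in>adm CARD('n) s \<tau> h. ereal (f0 CARD('n) g * real (card C)))"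
proof -
  let ?n = "CARD('n)"
  have n2: "?n \<ge> 2" by (rule assms(1))
  have fin: "finite C" and ne: "C \<noteq> {}" and sub: "C \<subseteq> usphere"
    and des: "\<And>p. poly_fun_deg \<tau> p \<Longrightarrow> (\<Sum>y\<in>C. p y) / real (card C) = sphere_avg p"
    using assms(3) unfolding spherical_design_def by auto
  have cpos: "card C > 0" using fin ne by (simp add: card_gt_0_iff)
  have key: "Ue h x C \<le> ereal (U (poly g) x C) \<and> U (poly g) x C = f0 ?n g * real (card C)"
    if g: "g \<in> adm ?n s \<tau> h" and x: "x \<in> usphere" and xy: "\<forall>y\<in>C. x \<bullet> y \<in> {-1..s}" for g x
  proof
    from g have dg: "degree g \<le> \<tau>" and gh: "\<And>t. t \<in> {-1..s} \<Longrightarrow> h t \<le> ereal (poly g t)"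
      unfolding adm_def by auto
    have "(\<Sum>y\<in>C. h (x \<bullet> y)) \<le> (\<Sum>y\<in>C. ereal (poly g (x \<bullet> y)))"
      by (rule sum_mono) (use gh xy in auto)
    then show "Ue h x C \<le> ereal (U (poly g) x C)"
      unfolding Ue_def U_def by simp
    have nx: "norm x = 1" using x by simp
    have "(\<Sum>y\<in>C. poly g (x \<bullet> y)) / real (card C) = sphere_avg (\<lambda>y. poly g (x \<bullet> y))"
      by (rule des[OF pf_poly[OF dg]])
    also have "\<dots> = f0 ?n g" by (rule M[OF n2 nx])
    finally show "U (poly g) x C = f0 ?n g * real (card C)"
      unfolding U_def using cpos by (simp add: field_simps)
  qed
  have sne: "usphere \<noteq> ({} :: (real^'n) set)" by simp
  obtain x0 where x0: "x0 \<in> usphere" and x0min: "\<And>x. x \<in> usphere \<Longrightarrow> Max ((\<lambda>y. x0 \<bullet> y) ` C) \<le> Max ((\<lambda>y. x \<bullet> y) ` C)"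
    using continuous_attains_inf[OF compact_sphere sne cont_Max_inner[OF fin ne]] by blast
  have sval: "s = Max ((\<lambda>y. x0 \<bullet> y) ` C)"
    unfolding assms(5) s_C_def
    by (rule cInf_eq_minimum) (use x0 x0min in auto)
  have xy0: "\<forall>y\<in>C. x0 \<bullet> y \<in> {-1..s}"
  proof
    fix y assume y: "y \<in> C"
    have "x0 \<bullet> y \<le> s" unfolding sval using fin y by (intro Max_ge) auto
    moreover have "abs (x0 \<bullet> y) \<le> norm x0 * norm y" by (rule Cauchy_Schwarz_ineq2)
    moreover have "norm x0 = 1" "norm y = 1" using x0 y sub by auto
    ultimately show "x0 \<bullet> y \<in> {-1..s}" by (auto simp: abs_le_iff)
  qed
  show ?thesis
  proof
    show "\<forall>x\<in>usphere. (\<forall>y\<in>C. x \<bullet> y \<in> {-1..s}) \<longrightarrow>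
            Ue h x C \<le> ereal (U (poly f) x C) \<and> U (poly f) x C = f0 ?n f * real (card C)"
      using key[OF assms(6)] by blast
    show "Qh h C \<le> (INF g\<in>adm ?n s \<tau> h. ereal (f0 ?n g * real (card C)))"
    proof (rule INF_greatest)
      fix g assume g: "g \<in> adm ?n s \<tau> h"
      have "Qh h C \<le> Ue h x0 C" unfolding Qh_def by (rule INF_lower[OF x0])
      also have "\<dots> \<le> ereal (U (poly g) x0 C)" using key[OF g x0 xy0] by blast
      also have "\<dots> = ereal (f0 ?n g * real (card C))" using key[OF g x0 xy0] by simp
      finally show "Qh h C \<le> ereal (f0 ?n g * real (card C))" .
    qed
  qed
qed


end
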